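(* For $j\in\{1,\dots,n\}$, let $X_j\subset\mathbb{R}$ be a union of finitely many disjoint closed intervals (rays allowed) and let $g^{\mathrm{in}}_j:X_j\to\mathbb{R}$ be a piecewise $\chi$ function. Then $\star\{(g^{\mathrm{in}}_j,X_j)\}_{j=1}^n$ is a piecewise $\chi$ function.
   Context: For $\tau=(\tau_1,\tau_2)\in\mathbb{R}^2$, $\chi_\tau:\mathbb{R}\to\mathbb{R}$ is $\chi_\tau(x)=x-\tau_1+\tau_2$ for $x\le\tau_1$ and $\chi_\tau(x)=-x+\tau_1+\tau_2$ for $x>\tau_1$; $\tau$ is its top point. A function $g:X\to\mathbb{R}$, $X\subseteq\mathbb{R}$, is a piecewise $\chi$ function if $X$ is a union of disjoint intervals and on each of these intervals $g$ equals the restriction of some $\chi_\tau$. The operator $\star$: given functions $g^{\mathrm{in}}_j:X_j\to\mathbb{R}$, $j=1,\dots,n$, it returns $g^{\mathrm{out}}=\star\{(g^{\mathrm{in}}_j,X_j)\}_{j=1}^n$ with domain the Minkowski sum $\sum_{j=1}^nX_j$, defined by $g^{\mathrm{out}}(z)=\max\{\sum_{j=1}^ng^{\mathrm{in}}_j(x_j): x\in\mathbb{R}^n,\ \sum_jx_j=z,\ x_j\in X_j\ \forall j\}$. *)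

theory Defs
  imports "HOL-Analysis.Analysis"
begin

definition chi :: "real \<times> real \<Rightarrow> real \<Rightarrow> real" where
  "chi \<tau> x = (if x \<le> fst \<tau> then x - fst \<tau> + snd \<tau> else - x + fst \<tau> + snd \<tau>)"

text \<open>A function g on domain X (values outside X are irrelevant) is piecewise chi:
  X is the union of finitely many pairwise disjoint intervals, and on each of
  them g agrees with some chi function.\<close>
definition piecewise_chi :: "(real \<Rightarrow> real) \<Rightarrow> real set \<Rightarrow> bool" where
  "piecewise_chi g X \<longleftrightarrow>
     (\<exists>\<I>. finite \<I> \<and> pairwise disjnt \<I> \<and> \<Union>\<I> = X \<and>
          (\<forall>J\<in>\<I>. is_interval J \<and> (\<exists>\<tau>. \<forall>x\<in>J. g x = chi \<tau> x)))"

definition finite_closed_interval_union :: "real set \<Rightarrow> bool" where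
  "finite_closed_interval_union X \<longleftrightarrow>
     (\<exists>\<I>. finite \<I> \<and> pairwise disjnt \<I> \<and> \<Union>\<I> = X \<and>
          (\<forall>J\<in>\<I>. is_interval J \<and> closed J))"

definition minkowski_sum :: "(nat \<Rightarrow> real set) \<Rightarrow> nat \<Rightarrow> real set" where
  "minkowski_sum X n = {z. \<exists>x. (\<forall>j\<in>{1..n}. x j \<in> X j) \<and> (\<Sum>j=1..n. x j) = z}"

text \<open>The star operator (the max is rendered as the supremum; it equals the max
  whenever the max exists).\<close>
definition star :: "(nat \<Rightarrow> real \<Rightarrow> real) \<Rightarrow> (nat \<Rightarrow> real set) \<Rightarrow> nat \<Rightarrow> real \<Rightarrow> real" where
  "star g X n z = Sup {(\<Sum>j=1..n. g j (x j)) | x. (\<forall>j\<in>{1..n}. x j \<in> X j) \<and> (\<Sum>j=1..n. x j) = z}"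

end

theory Submission
  imports Defs
begin

lemma chi_abs: "chi t x = snd t - \<bar>x - fst t\<bar>"
  unfolding chi_def by auto

lemma remove_one:
  assumes "finite Q" "pairwise disjnt Q" "\<forall>q\<in>Q. is_interval q" "is_interval (P::real set)"
  shows "\<exists>Q'. finite Q' \<and> pairwise disjnt Q' \<and> (\<forall>q\<in>Q'. is_interval q) \<and> \<Union>Q' = \<Union>Q - P \<and> (\<forall>q'\<in>Q'. \<exists>q\<in>Q. q' \<subseteq> q)"
proof -
  define L where "L = {x. \<forall>p\<in>P. x < p}"
  define R where "R = {x. \<forall>p\<in>P. p < x}"
  have iL: "is_interval L" unfolding L_def is_interval_1 by force
  have iR: "is_interval R" unfolding R_def is_interval_1 by force
  have LR: "P \<noteq> {} \<Longrightarrow> L \<inter> R = {}" unfolding L_def R_def by force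
  have cov: "x \<notin> P \<Longrightarrow> x \<in> L \<or> x \<in> R" for x
  proof (rule ccontr)
    assume "x \<notin> P" "\<not> (x \<in> L \<or> x \<in> R)"
    then obtain p1 p2 where "p1 \<in> P" "p2 \<in> P" "p1 \<le> x" "x \<le> p2" unfolding L_def R_def by force
    with assms(4) \<open>x \<notin> P\<close> show False unfolding is_interval_1 by blast
  qed
  have LP: "L \<inter> P = {}" "R \<inter> P = {}" unfolding L_def R_def by force+
  define Q' where "Q' = (\<lambda>q. q \<inter> L) ` Q \<union> (\<lambda>q. q \<inter> R) ` Q"
  have "pairwise disjnt Q'"
    unfolding Q'_def pairwise_def disjnt_def
  proof (intro ballI impI)
    fix A B assume A: "A \<in> (\<lambda>q. q \<inter> L) ` Q \<union> (\<lambda>q. q \<inter> R) ` Q"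
      and B: "B \<in> (\<lambda>q. q \<inter> L) ` Q \<union> (\<lambda>q. q \<inter> R) ` Q" and ne: "A \<noteq> B"
    from A obtain q1 where q1: "q1 \<in> Q" "A \<subseteq> q1" "A = q1 \<inter> L \<or> A = q1 \<inter> R" by blast
    from B obtain q2 where q2: "q2 \<in> Q" "B \<subseteq> q2" "B = q2 \<inter> L \<or> B = q2 \<inter> R" by blast
    show "A \<inter> B = {}"
    proof (cases "q1 = q2")
      case True
      show ?thesis
      proof (cases "P = {}")
        case True then have "L = UNIV" "R = UNIV" unfolding L_def R_def by auto
        with q1 q2 \<open>q1 = q2\<close> ne show ?thesis by auto
      next
        case False with LR q1 q2 \<open>q1 = q2\<close> ne show ?thesis by auto
      qed
    next
      case False
      with assms(2) q1 q2 have "q1 \<inter> q2 = {}" unfolding pairwise_def disjnt_def by blast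
      with q1 q2 show ?thesis by blast
    qed
  qed
  moreover have "finite Q'" unfolding Q'_def using assms(1) by auto
  moreover have "\<forall>q\<in>Q'. is_interval q" unfolding Q'_def using assms(3) iL iR is_interval_Int by auto
  moreover have "\<Union>Q' = \<Union>Q - P" unfolding Q'_def using cov LP by auto
  moreover have "\<forall>q'\<in>Q'. \<exists>q\<in>Q. q' \<subseteq> q" unfolding Q'_def by auto
  ultimately show ?thesis by blast
qed

lemma remove_many:
  assumes "finite R" "\<forall>r\<in>R. is_interval r" "is_interval (I::real set)"
  shows "\<exists>Q. finite Q \<and> pairwise disjnt Q \<and> (\<forall>q\<in>Q. is_interval q) \<and> \<Union>Q = I - \<Union>R \<and> (\<forall>q\<in>Q. q \<subseteq> I)"
  using assms(1,2)
proof (induction R rule: finite_induct)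
  case empty
  show ?case by (rule exI[of _ "{I}"]) (use assms(3) in auto)
next
  case (insert r R)
  then obtain Q where Q: "finite Q" "pairwise disjnt Q" "\<forall>q\<in>Q. is_interval q" "\<Union>Q = I - \<Union>R" "\<forall>q\<in>Q. q \<subseteq> I" by auto
  from remove_one[OF Q(1-3), of r] insert.prems obtain Q' where
    Q': "finite Q'" "pairwise disjnt Q'" "\<forall>q\<in>Q'. is_interval q" "\<Union>Q' = \<Union>Q - r" "\<forall>q'\<in>Q'. \<exists>q\<in>Q. q' \<subseteq> q" by auto
  have "\<Union>Q' = I - \<Union>(insert r R)" using Q(4) Q'(4) by auto
  moreover have "\<forall>q\<in>Q'. q \<subseteq> I"
  proof
    fix q' assume "q' \<in> Q'"
    then obtain q where "q \<in> Q" "q' \<subseteq> q" using Q'(5) by blast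
    then show "q' \<subseteq> I" using Q(5) by blast
  qed
  ultimately show ?case using Q'(1-3) by blast
qed

lemma disjointify:
  assumes "finite F" "\<forall>I\<in>F. is_interval (I::real set)"
  shows "\<exists>P. finite P \<and> pairwise disjnt P \<and> (\<forall>p\<in>P. is_interval p) \<and> \<Union>P = \<Union>F \<and> (\<forall>p\<in>P. \<exists>I\<in>F. p \<subseteq> I)"
  using assms
proof (induction F rule: finite_induct)
  case empty
  show ?case by (rule exI[of _ "{}"]) auto
next
  case (insert I F)
  then obtain P where P: "finite P" "pairwise disjnt P" "\<forall>p\<in>P. is_interval p" "\<Union>P = \<Union>F" "\<forall>p\<in>P. \<exists>I\<in>F. p \<subseteq> I" by auto
  from remove_many[OF P(1,3), of I] insert.prems obtain Q where
    Q: "finite Q" "pairwise disjnt Q" "\<forall>q\<in>Q. is_interval q" "\<Union>Q = I - \<Union>P" "\<forall>q\<in>Q. q \<subseteq> I" by auto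
  have "pairwise disjnt (P \<union> Q)"
    unfolding pairwise_def disjnt_def
  proof (intro ballI impI)
    fix A B assume A: "A \<in> P \<union> Q" and B: "B \<in> P \<union> Q" and ne: "A \<noteq> B"
    have dPQ: "A' \<inter> B' = {}" if "A' \<in> P" "B' \<in> Q" for A' B'
    proof -
      have "B' \<subseteq> I - \<Union>P" using Q(4) that(2) by blast
      moreover have "A' \<subseteq> \<Union>P" using that(1) by blast
      ultimately show ?thesis by blast
    qed
    show "A \<inter> B = {}"
    proof -
      { assume "A \<in> P" "B \<in> P" then have ?thesis using P(2) ne unfolding pairwise_def disjnt_def by blast }
      moreover { assume "A \<in> Q" "B \<in> Q" then have ?thesis using Q(2) ne unfolding pairwise_def disjnt_def by blast }
      moreover { assume "A \<in> P" "B \<in> Q" then have ?thesis using dPQ by blast }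
      moreover { assume "A \<in> Q" "B \<in> P" then have ?thesis using dPQ by blast }
      ultimately show ?thesis using A B by blast
    qed
  qed
  moreover have "\<Union>(P \<union> Q) = \<Union>(insert I F)" using P(4) Q(4) by auto
  moreover have "\<forall>p\<in>P \<union> Q. \<exists>J\<in>insert I F. p \<subseteq> J"
  proof
    fix p assume "p \<in> P \<union> Q"
    then show "\<exists>J\<in>insert I F. p \<subseteq> J"
    proof
      assume "p \<in> P" then obtain J where "J \<in> F" "p \<subseteq> J" using P(5) by blast
      then show ?thesis by blast
    next
      assume "p \<in> Q" then show ?thesis using Q(5) by blast
    qed
  qed
  moreover have "finite (P \<union> Q)" using P(1) Q(1) by simp
  moreover have "\<forall>p\<in>P \<union> Q. is_interval p" using P(3) Q(3) by blast
  ultimately show ?case by blast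
qed

lemma pw_weak:
  assumes "finite F" "\<forall>I\<in>F. is_interval I \<and> (\<exists>\<tau>. \<forall>x\<in>I. g x = chi \<tau> x)" "\<Union>F = X"
  shows "piecewise_chi g X"
proof -
  obtain P where P: "finite P" "pairwise disjnt P" "\<forall>p\<in>P. is_interval p" "\<Union>P = \<Union>F" "\<forall>p\<in>P. \<exists>I\<in>F. p \<subseteq> I"
    using disjointify[OF assms(1)] assms(2) by auto
  have "\<forall>J\<in>P. is_interval J \<and> (\<exists>\<tau>. \<forall>x\<in>J. g x = chi \<tau> x)"
  proof
    fix p assume p: "p \<in> P"
    then obtain I where I: "I \<in> F" "p \<subseteq> I" using P(5) by blast
    then obtain \<tau> where "\<forall>x\<in>I. g x = chi \<tau> x" using assms(2) by blast
    then have "\<forall>x\<in>p. g x = chi \<tau> x" using I(2) by blast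
    then show "is_interval p \<and> (\<exists>\<tau>. \<forall>x\<in>p. g x = chi \<tau> x)" using P(3) p by blast
  qed
  then show ?thesis unfolding piecewise_chi_def using P(1,2,4) assms(3) by blast
qed

definition fiu :: "real set \<Rightarrow> bool" where
  "fiu S \<longleftrightarrow> (\<exists>F. finite F \<and> (\<forall>I\<in>F. is_interval I) \<and> \<Union>F = S)"

lemma fiu_interval: "is_interval I \<Longrightarrow> fiu I"
  unfolding fiu_def by (rule exI[of _ "{I}"]) auto

lemma fiu_Un: "fiu A \<Longrightarrow> fiu B \<Longrightarrow> fiu (A \<union> B)"
  unfolding fiu_def by (metis Union_Un_distrib finite_UnI Un_iff)

lemma fiu_Int: assumes "fiu A" "fiu B" shows "fiu (A \<inter> B)"
proof -
  obtain F where F: "finite F" "\<forall>I\<in>F. is_interval I" "\<Union>F = A" using assms(1) unfolding fiu_def by auto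
  obtain G where G: "finite G" "\<forall>I\<in>G. is_interval I" "\<Union>G = B" using assms(2) unfolding fiu_def by auto
  let ?H = "(\<lambda>(I,J). I \<inter> J) ` (F \<times> G)"
  have "finite ?H" using F G by auto
  moreover have "\<forall>I\<in>?H. is_interval I" using F G is_interval_Int by auto
  moreover have "\<Union>?H = A \<inter> B" using F G by auto
  ultimately show ?thesis unfolding fiu_def by blast
qed

lemma fiu_INT: "finite K \<Longrightarrow> (\<forall>k\<in>K. fiu (B k)) \<Longrightarrow> fiu (\<Inter>k\<in>K. B k)"
proof (induction K rule: finite_induct)
  case empty
  then show ?case using fiu_interval[of UNIV] by simp
next
  case (insert k K)
  then show ?case using fiu_Int by simp
qed

lemma fiu_Compl: assumes "is_interval (D::real set)" shows "fiu (- D)"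
proof -
  have "- D = {x. \<forall>d\<in>D. x < d} \<union> {x. \<forall>d\<in>D. d < x}"
  proof
    show "- D \<subseteq> {x. \<forall>d\<in>D. x < d} \<union> {x. \<forall>d\<in>D. d < x}"
    proof
      fix x assume x: "x \<in> - D"
      show "x \<in> {x. \<forall>d\<in>D. x < d} \<union> {x. \<forall>d\<in>D. d < x}"
      proof (rule ccontr)
        assume "x \<notin> {x. \<forall>d\<in>D. x < d} \<union> {x. \<forall>d\<in>D. d < x}"
        then obtain p1 p2 where "p1 \<in> D" "p2 \<in> D" "p1 \<le> x" "x \<le> p2" by force
        with assms x show False unfolding is_interval_1 by blast
      qed
    qed
  qed force
  moreover have "is_interval {x. \<forall>d\<in>D. x < d}" unfolding is_interval_1 by force
  moreover have "is_interval {x. \<forall>d\<in>D. d < (x::real)}" unfolding is_interval_1 by force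
  ultimately show ?thesis using fiu_Un fiu_interval by metis
qed

lemma mono_h1: "(p::real) \<le> q \<Longrightarrow> a \<le> x \<Longrightarrow> \<bar>x - q\<bar> - \<bar>x - p\<bar> \<le> \<bar>a - q\<bar> - \<bar>a - p\<bar>"
  by (simp add: abs_if)
lemma mono_h2: "(q::real) \<le> p \<Longrightarrow> x \<le> b \<Longrightarrow> \<bar>x - q\<bar> - \<bar>x - p\<bar> \<le> \<bar>b - q\<bar> - \<bar>b - p\<bar>"
  by (simp add: abs_if)

lemma chi_le_interval: "is_interval {z. chi s z \<le> chi t z}"
  unfolding is_interval_1
proof (intro ballI allI impI)
  fix a b x assume a: "a \<in> {z. chi s z \<le> chi t z}" and b: "b \<in> {z. chi s z \<le> chi t z}" and x: "a \<le> x \<and> x \<le> b"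
  show "x \<in> {z. chi s z \<le> chi t z}"
  proof (cases "fst s \<le> fst t")
    case True
    from mono_h1[OF True, of a x] a x show ?thesis by (simp add: chi_abs)
  next
    case False
    from mono_h2[of "fst t" "fst s" x b] False b x show ?thesis by (simp add: chi_abs)
  qed
qed

lemma max_chi:
  assumes "finite K" "\<forall>k\<in>K. is_interval (D k)"
  shows "piecewise_chi (\<lambda>z. Max ((\<lambda>k. chi (T k) z) ` {k\<in>K. z \<in> D k})) (\<Union>k\<in>K. D k)"
proof -
  define A where "A k = D k \<inter> (\<Inter>l\<in>K. ({z. chi (T l) z \<le> chi (T k) z} \<union> - D l))" for k
  have "fiu (A k)" if "k \<in> K" for k
    unfolding A_def using assms that
    by (intro fiu_Int fiu_INT fiu_interval ballI fiu_Un fiu_Compl chi_le_interval) auto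
  then obtain Fa where Fa: "\<And>k. k \<in> K \<Longrightarrow> finite (Fa k) \<and> (\<forall>I\<in>Fa k. is_interval I) \<and> \<Union>(Fa k) = A k"
    unfolding fiu_def by metis
  let ?F = "\<Union>k\<in>K. Fa k"
  have val: "Max ((\<lambda>k. chi (T k) z) ` {k\<in>K. z \<in> D k}) = chi (T k) z" if "k \<in> K" "z \<in> A k" for k z
  proof (rule Max_eqI)
    show "finite ((\<lambda>k. chi (T k) z) ` {k\<in>K. z \<in> D k})" using assms(1) by auto
    show "chi (T k) z \<in> (\<lambda>k. chi (T k) z) ` {k\<in>K. z \<in> D k}" using that unfolding A_def by auto
    fix y assume "y \<in> (\<lambda>k. chi (T k) z) ` {k\<in>K. z \<in> D k}"
    then show "y \<le> chi (T k) z" using that unfolding A_def by auto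
  qed
  have cover: "(\<Union>k\<in>K. A k) = (\<Union>k\<in>K. D k)"
  proof
    show "(\<Union>k\<in>K. A k) \<subseteq> (\<Union>k\<in>K. D k)" unfolding A_def by auto
    show "(\<Union>k\<in>K. D k) \<subseteq> (\<Union>k\<in>K. A k)"
    proof
      fix z assume "z \<in> (\<Union>k\<in>K. D k)"
      then have ne: "{k\<in>K. z \<in> D k} \<noteq> {}" by auto
      have fin: "finite ((\<lambda>k. chi (T k) z) ` {k\<in>K. z \<in> D k})" using assms(1) by auto
      from Max_in[OF fin] ne obtain k where k: "k \<in> K" "z \<in> D k"
        "chi (T k) z = Max ((\<lambda>k. chi (T k) z) ` {k\<in>K. z \<in> D k})" by force
      have "z \<in> A k" unfolding A_def using k Max_ge[OF fin] by auto
      with k show "z \<in> (\<Union>k\<in>K. A k)" by auto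
    qed
  qed
  show ?thesis
  proof (rule pw_weak)
    show "finite ?F" using assms(1) Fa by auto
    have "\<Union>?F = (\<Union>k\<in>K. \<Union>(Fa k))" by auto
    also have "\<dots> = (\<Union>k\<in>K. A k)" using Fa by (intro SUP_cong) auto
    finally show "\<Union>?F = (\<Union>k\<in>K. D k)" using cover by simp
    show "\<forall>I\<in>?F. is_interval I \<and> (\<exists>\<tau>. \<forall>x\<in>I. Max ((\<lambda>k. chi (T k) x) ` {k\<in>K. x \<in> D k}) = chi \<tau> x)"
    proof
      fix I assume "I \<in> ?F"
      then obtain k where k: "k \<in> K" "I \<in> Fa k" by auto
      then have "I \<subseteq> A k" using Fa by auto
      then show "is_interval I \<and> (\<exists>\<tau>. \<forall>x\<in>I. Max ((\<lambda>k. chi (T k) x) ` {k\<in>K. x \<in> D k}) = chi \<tau> x)"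
        using k Fa val by blast
    qed
  qed
qed

lemma interp:
  assumes "is_interval (S::real set)" "a \<in> S" "b \<in> S" "0 \<le> t" "t \<le> 1"
  shows "a + t * (b - a) \<in> S"
proof (cases "a \<le> b")
  case True
  have "0 \<le> t * (b - a)" using True assms by simp
  moreover have "t * (b - a) \<le> b - a" using True assms mult_left_le_one_le[of "b - a" t] by simp
  ultimately have "a \<le> a + t * (b - a)" "a + t * (b - a) \<le> b" by linarith+
  then show ?thesis using assms(1-3) unfolding is_interval_1 by blast
next
  case False
  have "t * (b - a) \<le> 0" using False assms by (simp add: mult_nonneg_nonpos)
  moreover have "t * (a - b) \<le> a - b" using False assms mult_left_le_one_le[of "a - b" t] by simp
  ultimately have "b \<le> a + t * (b - a)" "a + t * (b - a) \<le> a" by (simp_all add: algebra_simps)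
  then show ?thesis using assms(1-3) unfolding is_interval_1 by blast
qed

lemma mink_interval:
  fixes J :: "nat \<Rightarrow> real set"
  assumes "\<forall>j\<in>{1..n}. is_interval (J j)"
  shows "is_interval (minkowski_sum J n)"
  unfolding is_interval_1
proof (intro ballI allI impI)
  fix a b z assume a: "a \<in> minkowski_sum J n" and b: "b \<in> minkowski_sum J n" and z: "a \<le> z \<and> z \<le> b"
  obtain x where x: "\<forall>j\<in>{1..n}. x j \<in> J j" "(\<Sum>j=1..n. x j) = a" using a unfolding minkowski_sum_def by auto
  obtain w where w: "\<forall>j\<in>{1..n}. w j \<in> J j" "(\<Sum>j=1..n. w j) = b" using b unfolding minkowski_sum_def by auto
  show "z \<in> minkowski_sum J n"
  proof (cases "a = b")
    case True then show ?thesis using a z by auto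
  next
    case False
    define t where "t = (z - a) / (b - a)"
    have ab: "a < b" using False z by auto
    have t01: "0 \<le> t" "t \<le> 1" unfolding t_def using ab z by (auto simp: field_simps)
    define y where "y j = x j + t * (w j - x j)" for j
    have "\<forall>j\<in>{1..n}. y j \<in> J j" unfolding y_def using interp assms x w t01 by blast
    moreover have "(\<Sum>j=1..n. y j) = a + t * (b - a)"
      unfolding y_def using x w by (simp add: sum.distrib sum_distrib_left[symmetric] sum_subtractf)
    moreover have "a + t * (b - a) = z" unfolding t_def using ab by (simp add: field_simps)
    ultimately show ?thesis unfolding minkowski_sum_def by auto
  qed
qed

lemma transport_up:
  fixes J :: "nat \<Rightarrow> real set" and y w :: "nat \<Rightarrow> real"
  assumes "\<forall>j\<in>{1..n}. is_interval (J j)" "\<forall>j\<in>{1..n}. y j \<in> J j"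
    "\<forall>j\<in>{1..n}. w j \<in> J j" "(\<Sum>j=1..n. w j) = z" "(\<Sum>j=1..n. y j) \<le> z"
  shows "\<exists>x. (\<forall>j\<in>{1..n}. x j \<in> J j) \<and> (\<Sum>j=1..n. x j) = z \<and> (\<Sum>j=1..n. \<bar>x j - y j\<bar>) = \<bar>z - (\<Sum>j=1..n. y j)\<bar>"
proof -
  define Y where "Y = (\<Sum>j=1..n. y j)"
  define m where "m j = max (y j) (w j)" for j
  define M where "M = (\<Sum>j=1..n. m j)"
  have mJ: "\<forall>j\<in>{1..n}. m j \<in> J j" unfolding m_def using assms by (auto simp: max_def)
  have "(\<Sum>j=1..n. w j) \<le> M" unfolding M_def m_def using sum_mono[of "{1..n}" w "\<lambda>j. max (y j) (w j)"] by auto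
  then have zM: "z \<le> M" using assms(4) by simp
  have Yz: "Y \<le> z" using assms(5) unfolding Y_def .
  show ?thesis
  proof (cases "M = Y")
    case True
    then have "z = Y" using zM Yz by simp
    then show ?thesis using assms(2) unfolding Y_def by (intro exI[of _ y]) auto
  next
    case False
    then have MY: "Y < M" using zM Yz by simp
    define t where "t = (z - Y) / (M - Y)"
    have t01: "0 \<le> t" "t \<le> 1" unfolding t_def using MY zM Yz by (auto simp: field_simps)
    define x where "x j = y j + t * (m j - y j)" for j
    have "\<forall>j\<in>{1..n}. x j \<in> J j" unfolding x_def using interp assms mJ t01 by blast
    moreover have sx: "(\<Sum>j=1..n. x j) = Y + t * (M - Y)"
      unfolding x_def Y_def M_def by (simp add: sum.distrib sum_distrib_left[symmetric] sum_subtractf)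
    moreover have "Y + t * (M - Y) = z" unfolding t_def using MY by (simp add: field_simps)
    moreover have "(\<Sum>j=1..n. \<bar>x j - y j\<bar>) = (\<Sum>j=1..n. t * (m j - y j))"
      unfolding x_def using t01 by (intro sum.cong) (auto simp: m_def abs_mult)
    moreover have "(\<Sum>j=1..n. t * (m j - y j)) = t * (M - Y)"
      unfolding M_def Y_def by (simp add: sum_distrib_left[symmetric] sum_subtractf)
    ultimately show ?thesis using Yz unfolding Y_def by (intro exI[of _ x]) auto
  qed
qed

lemma transport:
  fixes J :: "nat \<Rightarrow> real set" and y :: "nat \<Rightarrow> real"
  assumes "\<forall>j\<in>{1..n}. is_interval (J j)" "\<forall>j\<in>{1..n}. y j \<in> J j" "z \<in> minkowski_sum J n"
  shows "\<exists>x. (\<forall>j\<in>{1..n}. x j \<in> J j) \<and> (\<Sum>j=1..n. x j) = z \<and> (\<Sum>j=1..n. \<bar>x j - y j\<bar>) = \<bar>z - (\<Sum>j=1..n. y j)\<bar>"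
proof -
  obtain w where w: "\<forall>j\<in>{1..n}. w j \<in> J j" "(\<Sum>j=1..n. w j) = z" using assms(3) unfolding minkowski_sum_def by auto
  show ?thesis
  proof (cases "(\<Sum>j=1..n. y j) \<le> z")
    case True then show ?thesis using transport_up[OF assms(1,2) w] by blast
  next
    case False
    define J' where "J' j = uminus ` J j" for j
    have iJ': "\<forall>j\<in>{1..n}. is_interval (J' j)" unfolding J'_def using assms(1) is_interval_uminusI by blast
    have "\<exists>x. (\<forall>j\<in>{1..n}. x j \<in> J' j) \<and> (\<Sum>j=1..n. x j) = - z \<and> (\<Sum>j=1..n. \<bar>x j - - y j\<bar>) = \<bar>- z - (\<Sum>j=1..n. - y j)\<bar>"
    proof (rule transport_up[OF iJ', of "\<lambda>j. - y j" "\<lambda>j. - w j"])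
      show "\<forall>j\<in>{1..n}. - y j \<in> J' j" using assms(2) unfolding J'_def by auto
      show "\<forall>j\<in>{1..n}. - w j \<in> J' j" using w(1) unfolding J'_def by auto
      show "(\<Sum>j=1..n. - w j) = - z" using w(2) by (simp add: sum_negf)
      show "(\<Sum>j=1..n. - y j) \<le> - z" using False by (simp add: sum_negf)
    qed
    then obtain x where x: "\<forall>j\<in>{1..n}. x j \<in> J' j" "(\<Sum>j=1..n. x j) = - z" "(\<Sum>j=1..n. \<bar>x j - - y j\<bar>) = \<bar>- z - (\<Sum>j=1..n. - y j)\<bar>" by blast
    have "\<forall>j\<in>{1..n}. - x j \<in> J j" using x(1) unfolding J'_def by force
    moreover have "(\<Sum>j=1..n. - x j) = z" using x(2) by (simp add: sum_negf)
    moreover have "(\<Sum>j=1..n. \<bar>- x j - y j\<bar>) = \<bar>z - (\<Sum>j=1..n. y j)\<bar>"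
    proof -
      have "(\<Sum>j=1..n. \<bar>- x j - y j\<bar>) = (\<Sum>j=1..n. \<bar>x j - - y j\<bar>)" by (intro sum.cong) auto
      also have "\<dots> = \<bar>- z - (\<Sum>j=1..n. - y j)\<bar>" using x(3) .
      also have "\<dots> = \<bar>z - (\<Sum>j=1..n. y j)\<bar>" by (simp add: sum_negf)
      finally show ?thesis .
    qed
    ultimately show ?thesis by (intro exI[of _ "\<lambda>j. - x j"]) blast
  qed
qed

lemma conv:
  fixes J :: "nat \<Rightarrow> real set" and t :: "nat \<Rightarrow> real \<times> real"
  assumes iJ: "\<forall>j\<in>{1..n}. is_interval (J j)"
  shows "\<exists>\<tau>. \<forall>z\<in>minkowski_sum J n.
     (\<forall>s\<in>{(\<Sum>j=1..n. chi (t j) (x j)) | x. (\<forall>j\<in>{1..n}. x j \<in> J j) \<and> (\<Sum>j=1..n. x j) = z}. s \<le> chi \<tau> z) \<and>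
     Sup {(\<Sum>j=1..n. chi (t j) (x j)) | x. (\<forall>j\<in>{1..n}. x j \<in> J j) \<and> (\<Sum>j=1..n. x j) = z} = chi \<tau> z"
proof (cases "minkowski_sum J n = {}")
  case True then show ?thesis by auto
next
  case False
  then obtain x0 where x0: "\<forall>j\<in>{1..n}. x0 j \<in> J j" unfolding minkowski_sum_def by auto
  define a where "a j = fst (t j)" for j
  define c where "c j = (if (\<forall>y\<in>J j. y \<le> a j) then Sup (J j) else if (\<forall>y\<in>J j. a j \<le> y) then Inf (J j) else a j)" for j
  have F1: "\<bar>y - a j\<bar> = \<bar>y - c j\<bar> + \<bar>c j - a j\<bar>" if j: "j \<in> {1..n}" and y: "y \<in> J j" for j y
  proof -
    have ne: "J j \<noteq> {}" using x0 j by auto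
    show ?thesis
    proof (cases "\<forall>y\<in>J j. y \<le> a j")
      case True
      have "y \<le> Sup (J j)" using True y by (intro cSup_upper) (auto simp: bdd_above_def)
      moreover have "Sup (J j) \<le> a j" using True ne by (intro cSup_least) auto
      ultimately show ?thesis using True unfolding c_def by auto
    next
      case False1: False
      show ?thesis
      proof (cases "\<forall>y\<in>J j. a j \<le> y")
        case True
        have "Inf (J j) \<le> y" using True y by (intro cInf_lower) (auto simp: bdd_below_def)
        moreover have "a j \<le> Inf (J j)" using True ne by (intro cInf_greatest) auto
        ultimately show ?thesis using True False1 unfolding c_def by auto
      next
        case False
        then show ?thesis using False1 unfolding c_def by auto
      qed
    qed
  qed
  have F2: "\<exists>y\<in>J j. \<bar>y - c j\<bar> < d" if j: "j \<in> {1..n}" and d: "d > 0" for j d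
  proof -
    have ne: "J j \<noteq> {}" using x0 j by auto
    show ?thesis
    proof (cases "\<forall>y\<in>J j. y \<le> a j")
      case True
      have bdd: "bdd_above (J j)" using True by (auto simp: bdd_above_def)
      from less_cSupD[OF ne, of "Sup (J j) - d"] d obtain y where y: "y \<in> J j" "Sup (J j) - d < y" by auto
      have "y \<le> Sup (J j)" using cSup_upper[OF y(1) bdd] .
      then show ?thesis using y True unfolding c_def by (intro bexI[of _ y]) auto
    next
      case False1: False
      show ?thesis
      proof (cases "\<forall>y\<in>J j. a j \<le> y")
        case True
        have bdd: "bdd_below (J j)" using True by (auto simp: bdd_below_def)
        from cInf_lessD[OF ne, of "Inf (J j) + d"] d obtain y where y: "y \<in> J j" "y < Inf (J j) + d" by auto
        have "Inf (J j) \<le> y" using cInf_lower[OF y(1) bdd] .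
        then show ?thesis using y True False1 unfolding c_def by (intro bexI[of _ y]) auto
      next
        case False
        then obtain y1 y2 where "y1 \<in> J j" "y2 \<in> J j" "y1 \<le> a j" "a j \<le> y2" using False1 by force
        then have "a j \<in> J j" using iJ j unfolding is_interval_1 by blast
        then show ?thesis using False False1 d unfolding c_def by (intro bexI[of _ "a j"]) auto
      qed
    qed
  qed
  define B where "B = (\<Sum>j=1..n. snd (t j))"
  define Dc where "Dc = (\<Sum>j=1..n. \<bar>c j - a j\<bar>)"
  define C where "C = (\<Sum>j=1..n. c j)"
  define \<tau> where "\<tau> = (C, B - Dc)"
  have chiT: "chi \<tau> z = B - Dc - \<bar>z - C\<bar>" for z unfolding \<tau>_def chi_abs by simp
  have val: "(\<Sum>j=1..n. chi (t j) (x j)) = B - Dc - (\<Sum>j=1..n. \<bar>x j - c j\<bar>)"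
    if x: "\<forall>j\<in>{1..n}. x j \<in> J j" for x
  proof -
    have "(\<Sum>j=1..n. chi (t j) (x j)) = (\<Sum>j=1..n. snd (t j) - (\<bar>x j - c j\<bar> + \<bar>c j - a j\<bar>))"
      using F1 x by (intro sum.cong) (auto simp: chi_abs a_def)
    then show ?thesis unfolding B_def Dc_def by (simp add: sum_subtractf sum.distrib)
  qed
  have lower: "\<bar>z - C\<bar> \<le> (\<Sum>j=1..n. \<bar>x j - c j\<bar>)" if "(\<Sum>j=1..n. x j) = z" for x z
  proof -
    have "z - C = (\<Sum>j=1..n. x j - c j)" using that unfolding C_def by (simp add: sum_subtractf)
    then show ?thesis using sum_abs[of "\<lambda>j. x j - c j" "{1..n}"] by simp
  qed
  show ?thesis
  proof (intro exI[of _ \<tau>] ballI)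
    fix z assume z: "z \<in> minkowski_sum J n"
    let ?S = "{(\<Sum>j=1..n. chi (t j) (x j)) | x. (\<forall>j\<in>{1..n}. x j \<in> J j) \<and> (\<Sum>j=1..n. x j) = z}"
    have ub: "\<forall>s\<in>?S. s \<le> chi \<tau> z"
    proof
      fix s assume "s \<in> ?S"
      then obtain x where x: "\<forall>j\<in>{1..n}. x j \<in> J j" "(\<Sum>j=1..n. x j) = z" "s = (\<Sum>j=1..n. chi (t j) (x j))" by auto
      show "s \<le> chi \<tau> z" using val[OF x(1)] lower[OF x(2)] x(3) chiT by simp
    qed
    have ne: "?S \<noteq> {}" using z unfolding minkowski_sum_def by auto
    have bdd: "bdd_above ?S" using ub by (auto simp: bdd_above_def)
    have le: "Sup ?S \<le> chi \<tau> z" using ub ne by (intro cSup_least) auto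
    have sup: "Sup ?S = chi \<tau> z"
    proof (rule ccontr)
      assume "Sup ?S \<noteq> chi \<tau> z"
      with le have lt: "Sup ?S < chi \<tau> z" by simp
      define e where "e = chi \<tau> z - Sup ?S"
      have e: "e > 0" unfolding e_def using lt by simp
      define d where "d = e / (2 * (real n + 1))"
      have d: "d > 0" unfolding d_def using e by simp
      have "\<forall>j\<in>{1..n}. \<exists>y\<in>J j. \<bar>y - c j\<bar> < d" using F2 d by blast
      then obtain y where y: "\<forall>j\<in>{1..n}. y j \<in> J j \<and> \<bar>y j - c j\<bar> < d" by metis
      obtain x where x: "\<forall>j\<in>{1..n}. x j \<in> J j" "(\<Sum>j=1..n. x j) = z"
        "(\<Sum>j=1..n. \<bar>x j - y j\<bar>) = \<bar>z - (\<Sum>j=1..n. y j)\<bar>"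
        using transport[OF iJ _ z, of y] y by blast
      define E where "E = (\<Sum>j=1..n. \<bar>y j - c j\<bar>)"
      have E: "E \<le> real n * d"
      proof -
        have "E \<le> (\<Sum>j=1..n. d)" unfolding E_def using y by (intro sum_mono) (auto intro: less_imp_le)
        then show ?thesis by simp
      qed
      have "(\<Sum>j=1..n. \<bar>x j - c j\<bar>) \<le> (\<Sum>j=1..n. \<bar>x j - y j\<bar> + \<bar>y j - c j\<bar>)"
        by (intro sum_mono) simp
      also have "\<dots> = \<bar>z - (\<Sum>j=1..n. y j)\<bar> + E" unfolding E_def using x(3) by (simp add: sum.distrib)
      also have "\<bar>z - (\<Sum>j=1..n. y j)\<bar> \<le> \<bar>z - C\<bar> + E"
      proof -
        have "C - (\<Sum>j=1..n. y j) = (\<Sum>j=1..n. c j - y j)" unfolding C_def by (simp add: sum_subtractf)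
        then have "\<bar>C - (\<Sum>j=1..n. y j)\<bar> \<le> E" unfolding E_def
          using sum_abs[of "\<lambda>j. c j - y j" "{1..n}"] by (simp add: abs_minus_commute)
        then show ?thesis by linarith
      qed
      finally have xc: "(\<Sum>j=1..n. \<bar>x j - c j\<bar>) \<le> \<bar>z - C\<bar> + 2 * E" by simp
      have "2 * E \<le> 2 * real n * d" using E by simp
      also have "\<dots> < e"
      proof -
        have "2 * real n * d = e * (2 * real n) / (2 * (real n + 1))" unfolding d_def by simp
        also have "\<dots> < e" using e by (simp add: field_simps)
        finally show ?thesis .
      qed
      finally have "2 * E < e" .
      have inS: "(\<Sum>j=1..n. chi (t j) (x j)) \<in> ?S" using x(1,2) by blast
      have "(\<Sum>j=1..n. chi (t j) (x j)) > Sup ?S"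
        using val[OF x(1)] xc \<open>2 * E < e\<close> chiT[of z] unfolding e_def by linarith
      moreover have "(\<Sum>j=1..n. chi (t j) (x j)) \<le> Sup ?S" using cSup_upper[OF inS bdd] .
      ultimately show False by simp
    qed
    show "(\<forall>s\<in>?S. s \<le> chi \<tau> z) \<and> Sup ?S = chi \<tau> z" using ub sup by blast
  qed
qed

lemma pw_cong: "piecewise_chi f A \<Longrightarrow> \<forall>x\<in>A. f x = h x \<Longrightarrow> piecewise_chi h A"
  unfolding piecewise_chi_def by (metis UnionI)

theorem proposition2:
  fixes n :: nat and X :: "nat \<Rightarrow> real set" and g :: "nat \<Rightarrow> real \<Rightarrow> real"
  assumes "\<And>j. j \<in> {1..n} \<Longrightarrow> finite_closed_interval_union (X j)"
    and "\<And>j. j \<in> {1..n} \<Longrightarrow> piecewise_chi (g j) (X j)"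
  shows "piecewise_chi (star g X n) (minkowski_sum X n)"
proof -
  have "\<forall>j\<in>{1..n}. \<exists>\<I>. finite \<I> \<and> \<Union>\<I> = X j \<and> (\<forall>J\<in>\<I>. is_interval J \<and> (\<exists>\<tau>. \<forall>x\<in>J. g j x = chi \<tau> x))"
  proof
    fix j assume j: "j \<in> {1..n}"
    obtain I where I: "finite I" "\<Union>I = X j" "\<forall>J\<in>I. is_interval J \<and> (\<exists>\<tau>. \<forall>x\<in>J. g j x = chi \<tau> x)"
      using assms(2)[OF j] unfolding piecewise_chi_def by metis
    then show "\<exists>\<I>. finite \<I> \<and> \<Union>\<I> = X j \<and> (\<forall>J\<in>\<I>. is_interval J \<and> (\<exists>\<tau>. \<forall>x\<in>J. g j x = chi \<tau> x))"
      by (intro exI[of _ I]) simp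
  qed
  from bchoice[OF this] obtain Is where Is: "\<forall>j\<in>{1..n}. finite (Is j) \<and> \<Union>(Is j) = X j \<and> (\<forall>J\<in>Is j. is_interval J \<and> (\<exists>\<tau>. \<forall>x\<in>J. g j x = chi \<tau> x))"
    by blast
  define tp where "tp j J = (SOME \<tau>. \<forall>x\<in>J. g j x = chi \<tau> x)" for j J
  have tp: "\<forall>x\<in>J. g j x = chi (tp j J) x" if "j \<in> {1..n}" "J \<in> Is j" for j J
  proof -
    have "\<exists>\<tau>. \<forall>x\<in>J. g j x = chi \<tau> x" using Is that by blast
    then show ?thesis unfolding tp_def by (rule someI_ex)
  qed
  define K where "K = PiE {1..n} Is"
  have finK: "finite K" unfolding K_def using Is by (intro finite_PiE) auto
  have Kint: "\<forall>j\<in>{1..n}. is_interval (\<sigma> j)" if "\<sigma> \<in> K" for \<sigma>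
    using that Is unfolding K_def by (auto simp: PiE_iff)
  have KX: "\<forall>j\<in>{1..n}. \<sigma> j \<subseteq> X j" if "\<sigma> \<in> K" for \<sigma>
  proof
    fix j assume j: "j \<in> {1..n}"
    have "\<sigma> j \<in> Is j" using that j unfolding K_def by (auto simp: PiE_iff)
    moreover have "\<Union>(Is j) = X j" using Is j by blast
    ultimately show "\<sigma> j \<subseteq> X j" by blast
  qed
  have pick: "\<exists>\<sigma>\<in>K. \<forall>j\<in>{1..n}. x j \<in> \<sigma> j" if "\<forall>j\<in>{1..n}. x j \<in> X j" for x
  proof -
    define \<sigma> where "\<sigma> j = (if j \<in> {1..n} then (SOME I. I \<in> Is j \<and> x j \<in> I) else undefined)" for j
    have "\<sigma> j \<in> Is j \<and> x j \<in> \<sigma> j" if j: "j \<in> {1..n}" for j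
    proof -
      have "\<exists>I. I \<in> Is j \<and> x j \<in> I" using Is \<open>\<forall>j\<in>{1..n}. x j \<in> X j\<close> j by blast
      then have "(SOME I. I \<in> Is j \<and> x j \<in> I) \<in> Is j \<and> x j \<in> (SOME I. I \<in> Is j \<and> x j \<in> I)" by (rule someI_ex)
      then show ?thesis unfolding \<sigma>_def using j by simp
    qed
    moreover have "\<sigma> \<in> extensional {1..n}" unfolding extensional_def \<sigma>_def by simp
    moreover have "\<sigma> \<in> K" unfolding K_def PiE_iff using calculation by blast
    ultimately show ?thesis by blast
  qed
  define Sg where "Sg \<sigma> z = {(\<Sum>j=1..n. chi (tp j (\<sigma> j)) (x j)) | x. (\<forall>j\<in>{1..n}. x j \<in> \<sigma> j) \<and> (\<Sum>j=1..n. x j) = z}" for \<sigma> z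
  have "\<forall>\<sigma>\<in>K. \<exists>\<tau>. \<forall>z\<in>minkowski_sum \<sigma> n. (\<forall>s\<in>Sg \<sigma> z. s \<le> chi \<tau> z) \<and> Sup (Sg \<sigma> z) = chi \<tau> z"
  proof
    fix \<sigma> assume \<sigma>: "\<sigma> \<in> K"
    show "\<exists>\<tau>. \<forall>z\<in>minkowski_sum \<sigma> n. (\<forall>s\<in>Sg \<sigma> z. s \<le> chi \<tau> z) \<and> Sup (Sg \<sigma> z) = chi \<tau> z"
      unfolding Sg_def by (rule conv[where J=\<sigma> and t="\<lambda>j. tp j (\<sigma> j)" and n=n, OF Kint[OF \<sigma>]])
  qed
  from bchoice[OF this] obtain T where T: "\<forall>\<sigma>\<in>K. \<forall>z\<in>minkowski_sum \<sigma> n. (\<forall>s\<in>Sg \<sigma> z. s \<le> chi (T \<sigma>) z) \<and> Sup (Sg \<sigma> z) = chi (T \<sigma>) z"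
    by blast
  define D where "D \<sigma> = minkowski_sum \<sigma> n" for \<sigma>
  have Dint: "\<forall>\<sigma>\<in>K. is_interval (D \<sigma>)" unfolding D_def using Kint mink_interval by blast
  have pw: "piecewise_chi (\<lambda>z. Max ((\<lambda>\<sigma>. chi (T \<sigma>) z) ` {\<sigma>\<in>K. z \<in> D \<sigma>})) (\<Union>\<sigma>\<in>K. D \<sigma>)"
    by (rule max_chi[OF finK Dint])
  have dom: "(\<Union>\<sigma>\<in>K. D \<sigma>) = minkowski_sum X n"
  proof
    show "(\<Union>\<sigma>\<in>K. D \<sigma>) \<subseteq> minkowski_sum X n"
      unfolding D_def minkowski_sum_def using KX by blast
    show "minkowski_sum X n \<subseteq> (\<Union>\<sigma>\<in>K. D \<sigma>)"
    proof
      fix z assume "z \<in> minkowski_sum X n"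
      then obtain x where x: "\<forall>j\<in>{1..n}. x j \<in> X j" "(\<Sum>j=1..n. x j) = z" unfolding minkowski_sum_def by auto
      from pick[OF x(1)] obtain \<sigma> where "\<sigma> \<in> K" "\<forall>j\<in>{1..n}. x j \<in> \<sigma> j" by blast
      then show "z \<in> (\<Union>\<sigma>\<in>K. D \<sigma>)" unfolding D_def minkowski_sum_def using x(2) by blast
    qed
  qed
  have eq: "Max ((\<lambda>\<sigma>. chi (T \<sigma>) z) ` {\<sigma>\<in>K. z \<in> D \<sigma>}) = star g X n z" if z: "z \<in> minkowski_sum X n" for z
  proof -
    let ?A = "(\<lambda>\<sigma>. chi (T \<sigma>) z) ` {\<sigma>\<in>K. z \<in> D \<sigma>}"
    let ?M = "Max ?A"
    let ?S = "{(\<Sum>j=1..n. g j (x j)) | x. (\<forall>j\<in>{1..n}. x j \<in> X j) \<and> (\<Sum>j=1..n. x j) = z}"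
    have finA: "finite ?A" using finK by auto
    have neA: "?A \<noteq> {}" using z dom by auto
    have ub: "\<forall>s\<in>?S. s \<le> ?M"
    proof
      fix s assume "s \<in> ?S"
      then obtain x where x: "\<forall>j\<in>{1..n}. x j \<in> X j" "(\<Sum>j=1..n. x j) = z" "s = (\<Sum>j=1..n. g j (x j))" by auto
      from pick[OF x(1)] obtain \<sigma> where \<sigma>: "\<sigma> \<in> K" "\<forall>j\<in>{1..n}. x j \<in> \<sigma> j" by blast
      have zD: "z \<in> D \<sigma>" unfolding D_def minkowski_sum_def using \<sigma> x(2) by blast
      have "s = (\<Sum>j=1..n. chi (tp j (\<sigma> j)) (x j))"
        unfolding x(3) using tp \<sigma> unfolding K_def by (intro sum.cong) (auto simp: PiE_iff)
      then have "s \<in> Sg \<sigma> z" unfolding Sg_def using \<sigma>(2) x(2) by blast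
      then have "s \<le> chi (T \<sigma>) z" using T \<sigma>(1) zD unfolding D_def by blast
      also have "chi (T \<sigma>) z \<le> ?M" using finA \<sigma>(1) zD by (intro Max_ge) auto
      finally show "s \<le> ?M" .
    qed
    have neS: "?S \<noteq> {}" using z unfolding minkowski_sum_def by auto
    have bdd: "bdd_above ?S" using ub by (auto simp: bdd_above_def)
    have le: "Sup ?S \<le> ?M" using ub neS by (intro cSup_least) auto
    from Max_in[OF finA neA] obtain \<sigma>0 where s0: "\<sigma>0 \<in> K" "z \<in> D \<sigma>0" "?M = chi (T \<sigma>0) z" by auto
    have "?M = Sup (Sg \<sigma>0 z)" using T s0 unfolding D_def by auto
    also have "Sup (Sg \<sigma>0 z) \<le> Sup ?S"
    proof (rule cSup_subset_mono)
      show "Sg \<sigma>0 z \<noteq> {}" using s0(2) unfolding D_def minkowski_sum_def Sg_def by auto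
      show "bdd_above ?S" by (rule bdd)
      show "Sg \<sigma>0 z \<subseteq> ?S"
      proof
        fix s assume "s \<in> Sg \<sigma>0 z"
        then obtain x where x: "\<forall>j\<in>{1..n}. x j \<in> \<sigma>0 j" "(\<Sum>j=1..n. x j) = z" "s = (\<Sum>j=1..n. chi (tp j (\<sigma>0 j)) (x j))"
          unfolding Sg_def by auto
        have "s = (\<Sum>j=1..n. g j (x j))"
          unfolding x(3)
        proof (rule sum.cong[OF refl])
          fix j assume j: "j \<in> {1..n}"
          have "\<sigma>0 j \<in> Is j" using s0(1) j unfolding K_def by (auto simp: PiE_iff)
          then have "g j (x j) = chi (tp j (\<sigma>0 j)) (x j)" using tp[OF j] x(1) j by blast
          then show "chi (tp j (\<sigma>0 j)) (x j) = g j (x j)" by simp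
        qed
        moreover have "\<forall>j\<in>{1..n}. x j \<in> X j" using KX[OF s0(1)] x(1) by blast
        ultimately show "s \<in> ?S" using x(2) by blast
      qed
    qed
    finally show ?thesis using le unfolding star_def by simp
  qed
  show ?thesis using pw_cong[OF pw] dom eq by simp
qed

end
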